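(* Let $F_2$ be the free group on $x,y$ and let $w(x,y)=x^{a_1}y^{b_1}x^{a_2}y^{b_2}\cdots x^{a_k}y^{b_k}$ with $k\ge 1$ and all integers $a_i\neq 0$, $b_i\neq 0$. If all $b_i$ are positive, then either the word map $w:\mathrm{SL}(2,\mathbb{C})^2\to\mathrm{SL}(2,\mathbb{C})$ is surjective, or $w=v^2$ for some word $v\neq \mathrm{id}$ in $F_2$.
   Context: The word map $w:\mathrm{SL}(2,\mathbb{C})^2\to \mathrm{SL}(2,\mathbb{C})$ sends $(X,Y)$ to $X^{a_1}Y^{b_1}\cdots X^{a_k}Y^{b_k}$. *)

theory Defs
  imports "HOL-Analysis.Analysis"
begin

text \<open>Free group F_2 on generators x, y: words are lists of letters
  (generator, inverted?); two words are equal in F_2 iff their free reductions agree.\<close>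

datatype gen = GX | GY

type_synonym letter = "gen \<times> bool"

definition inv_letter :: "letter \<Rightarrow> letter" where
  "inv_letter l = (fst l, \<not> snd l)"

fun freduce :: "letter list \<Rightarrow> letter list" where
  "freduce [] = []"
| "freduce (l # w) = (case freduce w of
       [] \<Rightarrow> [l]
     | m # r \<Rightarrow> (if m = inv_letter l then r else l # m # r))"

definition free_eq :: "letter list \<Rightarrow> letter list \<Rightarrow> bool" where
  "free_eq u v \<longleftrightarrow> freduce u = freduce v"

definition gen_pow :: "gen \<Rightarrow> int \<Rightarrow> letter list" where
  "gen_pow g n = (if n \<ge> 0 then replicate (nat n) (g, False) else replicate (nat (- n)) (g, True))"

text \<open>w = x^{a_1} y^{b_1} ... x^{a_k} y^{b_k} (indices 0..k-1).\<close>
definition word_w :: "(nat \<Rightarrow> int) \<Rightarrow> (nat \<Rightarrow> int) \<Rightarrow> nat \<Rightarrow> letter list" where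
  "word_w a b k = concat (map (\<lambda>i. gen_pow GX (a i) @ gen_pow GY (b i)) [0..<k])"

definition SL2 :: "(complex^2^2) set" where
  "SL2 = {M. det M = 1}"

definition letter_eval :: "complex^2^2 \<Rightarrow> complex^2^2 \<Rightarrow> letter \<Rightarrow> complex^2^2" where
  "letter_eval A B l = (let M = (if fst l = GX then A else B) in
     if snd l then matrix_inv M else M)"

definition word_eval :: "complex^2^2 \<Rightarrow> complex^2^2 \<Rightarrow> letter list \<Rightarrow> complex^2^2" where
  "word_eval A B w = foldr (\<lambda>l M. letter_eval A B l ** M) w (mat 1)"

definition word_map_surjective :: "letter list \<Rightarrow> bool" where
  "word_map_surjective w \<longleftrightarrow> (\<forall>g\<in>SL2. \<exists>A\<in>SL2. \<exists>B\<in>SL2. word_eval A B w = g)"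

end

theory Submission
  imports Defs
begin


definition mk2 :: "complex \<Rightarrow> complex \<Rightarrow> complex \<Rightarrow> complex \<Rightarrow> complex^2^2" where
  "mk2 a b c d = (\<chi> i j. if i = 1 then (if j = 1 then a else b) else (if j = 1 then c else d))"

lemma mk2_nth[simp]: "mk2 a b c d $ 1 $ 1 = a" "mk2 a b c d $ 1 $ 2 = b"
   "mk2 a b c d $ 2 $ 1 = c" "mk2 a b c d $ 2 $ 2 = d"
  by (simp_all add: mk2_def)

lemma mk2_eta: "M = mk2 (M$1$1) (M$1$2) (M$2$1) (M$2$2)"
  by (simp add: mk2_def vec_eq_iff forall_2)

lemma mk2_eq: "mk2 a b c d = mk2 a' b' c' d' \<longleftrightarrow> a = a' \<and> b = b' \<and> c = c' \<and> d = d'"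
  by (metis mk2_nth)

lemma mk2_mult: "mk2 a b c d ** mk2 a' b' c' d' = mk2 (a*a'+b*c') (a*b'+b*d') (c*a'+d*c') (c*b'+d*d')"
  by (simp add: matrix_matrix_mult_def vec_eq_iff forall_2 sum_2 mk2_def)

lemma mk2_one: "mat 1 = mk2 1 0 0 1"
  by (simp add: mat_def vec_eq_iff forall_2 mk2_def)

lemma mk2_det: "det (mk2 a b c d) = a*d - b*c"
  by (simp add: det_2)

lemma matrix_inv_eq:
  fixes A B :: "complex^2^2"
  assumes "A ** B = mat 1" "B ** A = mat 1"
  shows "matrix_inv A = B"
proof -
  have ex: "\<exists>A'. A ** A' = mat 1 \<and> A' ** A = mat 1" using assms by blast
  let ?A' = "matrix_inv A"
  have h: "A ** ?A' = mat 1 \<and> ?A' ** A = mat 1"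
    unfolding matrix_inv_def by (rule someI_ex[OF ex])
  have "?A' = ?A' ** (A ** B)" using assms by simp
  also have "\<dots> = (?A' ** A) ** B" by (simp add: matrix_mul_assoc)
  also have "\<dots> = B" using h by simp
  finally show ?thesis .
qed

lemma inv_det1:
  fixes M :: "complex^2^2" assumes "det M = 1"
  shows "matrix_inv M = mk2 (M$2$2) (-M$1$2) (-M$2$1) (M$1$1)"
    "M ** matrix_inv M = mat 1" "matrix_inv M ** M = mat 1"
proof -
  obtain a b c d where M: "M = mk2 a b c d" by (metis mk2_eta)
  have d: "a*d - b*c = 1" using assms M by (simp add: mk2_det)
  have e1: "M ** mk2 (M$2$2) (-M$1$2) (-M$2$1) (M$1$1) = mat 1"
    using d by (simp add: M mk2_mult mk2_one mk2_eq algebra_simps)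
  have e2: "mk2 (M$2$2) (-M$1$2) (-M$2$1) (M$1$1) ** M = mat 1"
    using d by (simp add: M mk2_mult mk2_one mk2_eq algebra_simps)
  show i: "matrix_inv M = mk2 (M$2$2) (-M$1$2) (-M$2$1) (M$1$1)" by (rule matrix_inv_eq[OF e1 e2])
  show "M ** matrix_inv M = mat 1" "matrix_inv M ** M = mat 1" using e1 e2 i by simp_all
qed

lemma det_conj:
  fixes P Q A :: "complex^2^2"
  assumes "P ** Q = mat 1" "det A = 1"
  shows "det (P ** A ** Q) = 1"
proof -
  have "det P * det Q = 1" using assms(1) det_mul[of P Q] by simp
  then show ?thesis using assms(2) by (simp add: det_mul)
qed

lemma word_eval_append: "word_eval A B (u @ v) = word_eval A B u ** word_eval A B v"
  by (induction u) (simp_all add: word_eval_def matrix_mul_assoc matrix_mul_lid)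

lemma word_eval_conj:
  fixes P Q A B :: "complex^2^2"
  assumes PQ: "P ** Q = mat 1" and QP: "Q ** P = mat 1" and dA: "det A = 1" and dB: "det B = 1"
  shows "word_eval (P ** A ** Q) (P ** B ** Q) w = P ** word_eval A B w ** Q"
proof (induction w)
  case Nil
  then show ?case using PQ by (simp add: word_eval_def matrix_mul_rid)
next
  case (Cons l w)
  have inv: "matrix_inv (P ** M ** Q) = P ** matrix_inv M ** Q" if "det M = 1" for M
  proof (rule matrix_inv_eq)
    note h = inv_det1(2,3)[OF that]
    have "P ** M ** Q ** (P ** matrix_inv M ** Q) = P ** M ** (Q ** P) ** matrix_inv M ** Q"
      by (simp add: matrix_mul_assoc)
    also have "\<dots> = P ** (M ** matrix_inv M) ** Q" using QP by (simp add: matrix_mul_rid matrix_mul_assoc)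
    also have "\<dots> = P ** Q" using h by (simp add: matrix_mul_rid)
    finally show "P ** M ** Q ** (P ** matrix_inv M ** Q) = mat 1" using PQ by simp
    have "P ** matrix_inv M ** Q ** (P ** M ** Q) = P ** matrix_inv M ** (Q ** P) ** M ** Q"
      by (simp add: matrix_mul_assoc)
    also have "\<dots> = P ** (matrix_inv M ** M) ** Q" using QP by (simp add: matrix_mul_rid matrix_mul_assoc)
    also have "\<dots> = P ** Q" using h by (simp add: matrix_mul_rid)
    finally show "P ** matrix_inv M ** Q ** (P ** M ** Q) = mat 1" using PQ by simp
  qed
  have le: "letter_eval (P ** A ** Q) (P ** B ** Q) l = P ** letter_eval A B l ** Q"
    using inv[OF dA] inv[OF dB] by (simp add: letter_eval_def Let_def)
  have "word_eval (P ** A ** Q) (P ** B ** Q) (l # w) = letter_eval (P ** A ** Q) (P ** B ** Q) l ** word_eval (P ** A ** Q) (P ** B ** Q) w"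
    by (simp add: word_eval_def)
  also have "\<dots> = P ** letter_eval A B l ** (Q ** P) ** word_eval A B w ** Q"
    using le Cons by (simp add: matrix_mul_assoc)
  also have "\<dots> = P ** word_eval A B (l # w) ** Q"
    using QP by (simp add: matrix_mul_rid word_eval_def matrix_mul_assoc)
  finally show ?case .
qed

definition tri :: "complex \<Rightarrow> complex \<Rightarrow> complex^2^2" where
  "tri p q = mk2 p q 0 (1/p)"

lemma tri_det: "p \<noteq> 0 \<Longrightarrow> det (tri p q) = 1"
  by (simp add: tri_def mk2_det)

lemma tri_mult: "p \<noteq> 0 \<Longrightarrow> p' \<noteq> 0 \<Longrightarrow> tri p q ** tri p' q' = tri (p*p') (p*q' + q/p')"
  by (simp add: tri_def mk2_mult mk2_eq divide_simps)

lemma tri_one: "mat 1 = tri 1 0"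
  by (simp add: tri_def mk2_one)

lemma tri_eq: "tri p q = tri p' q' \<longleftrightarrow> p = p' \<and> q = q'"
  by (auto simp: tri_def mk2_eq)

definition build :: "int list \<Rightarrow> letter list" where
  "build cs = concat (map (\<lambda>c. gen_pow GX c @ [(GY, False)]) cs)"

lemma build_simps[simp]: "build [] = []" "build (c # cs) = gen_pow GX c @ (GY, False) # build cs"
  "build (xs @ ys) = build xs @ build ys"
  by (simp_all add: build_def)

definition Sc :: "complex \<Rightarrow> complex \<Rightarrow> int list \<Rightarrow> complex" where
  "Sc lam mu cs = (\<Sum>f<length cs. (lam powi (sum_list (take (Suc f) cs)))^2 * mu^(2*f))"

lemma Sc_Nil[simp]: "Sc lam mu [] = 0" by (simp add: Sc_def)

lemma Sc_Cons: assumes "lam \<noteq> 0" shows "Sc lam mu (c # cs) = (lam powi c)^2 * (1 + mu^2 * Sc lam mu cs)"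
proof -
  have "Sc lam mu (c # cs) = (\<Sum>f<Suc (length cs). (lam powi (sum_list (take (Suc f) (c#cs))))^2 * mu^(2*f))"
    by (simp add: Sc_def)
  also have "\<dots> = (lam powi c)^2 + (\<Sum>f<length cs. (lam powi (sum_list (take (Suc (Suc f)) (c#cs))))^2 * mu^(2*Suc f))"
    by (subst sum.lessThan_Suc_shift) simp
  also have "\<dots> = (lam powi c)^2 + (\<Sum>f<length cs. (lam powi c)^2 * mu^2 * ((lam powi (sum_list (take (Suc f) cs)))^2 * mu^(2*f)))"
    using assms by (intro arg_cong2[where f="(+)"] refl sum.cong) (simp_all add: power_int_add power_mult_distrib power_add mult_ac power2_eq_square)
  also have "\<dots> = (lam powi c)^2 * (1 + mu^2 * Sc lam mu cs)"
    by (simp add: Sc_def sum_distrib_left algebra_simps)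
  finally show ?thesis .
qed

lemma eval_X_rep: "lam \<noteq> 0 \<Longrightarrow> word_eval (tri lam 0) B (replicate n (GX, b)) = tri ((if b then 1/lam else lam)^n) 0"
proof (induction n)
  case 0 then show ?case by (simp add: word_eval_def tri_one)
next
  case (Suc n)
  have l: "letter_eval (tri lam 0) B (GX, b) = tri (if b then 1/lam else lam) 0"
    using Suc.prems by (simp add: letter_eval_def inv_det1 tri_det) (simp add: tri_def mk2_eq)
  have "word_eval (tri lam 0) B (replicate (Suc n) (GX, b)) = letter_eval (tri lam 0) B (GX, b) ** word_eval (tri lam 0) B (replicate n (GX, b))"
    by (simp add: word_eval_def)
  also have "\<dots> = tri ((if b then 1/lam else lam)^Suc n) 0"
    using Suc by (simp add: l tri_mult)
  finally show ?case .
qed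

lemma eval_genX: "lam \<noteq> 0 \<Longrightarrow> word_eval (tri lam 0) B (gen_pow GX c) = tri (lam powi c) 0"
  by (simp add: gen_pow_def eval_X_rep power_int_def power_divide power_inverse inverse_eq_divide)

lemma eval_build:
  assumes "lam \<noteq> 0" "mu \<noteq> 0"
  shows "word_eval (tri lam 0) (tri mu t) (build cs) =
    tri (lam powi sum_list cs * mu ^ length cs) (t * mu * Sc lam mu cs / (lam powi sum_list cs * mu ^ length cs))"
proof (induction cs)
  case Nil then show ?case by (simp add: word_eval_def tri_one)
next
  case (Cons c cs)
  have ly: "word_eval (tri lam 0) (tri mu t) [(GY,False)] = tri mu t"
    using assms by (simp add: word_eval_def letter_eval_def tri_one tri_mult)
  have "word_eval (tri lam 0) (tri mu t) (build (c # cs)) =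
     word_eval (tri lam 0) (tri mu t) (gen_pow GX c) ** (word_eval (tri lam 0) (tri mu t) [(GY,False)] ** word_eval (tri lam 0) (tri mu t) (build cs))"
    by (simp add: word_eval_append[symmetric])
  also have "\<dots> = tri (lam powi c) 0 ** (tri mu t ** tri (lam powi sum_list cs * mu ^ length cs) (t * mu * Sc lam mu cs / (lam powi sum_list cs * mu ^ length cs)))"
    using Cons assms by (simp add: eval_genX ly)
  also have "\<dots> = tri (lam powi sum_list (c # cs) * mu ^ length (c # cs)) (t * mu * Sc lam mu (c # cs) / (lam powi sum_list (c # cs) * mu ^ length (c # cs)))"
    using assms by (simp add: tri_mult tri_eq Sc_Cons power_int_add field_simps power2_eq_square)
  finally show ?case .
qed

lemma triangularize:
  fixes g :: "complex^2^2" assumes "det g = 1"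
  shows "\<exists>P Q d c. P ** Q = mat 1 \<and> Q ** P = mat 1 \<and> d \<noteq> 0 \<and> g = P ** tri d c ** Q"
proof -
  obtain a b e f where g: "g = mk2 a b e f" by (metis mk2_eta)
  have det: "a*f - b*e = 1" using assms g by (simp add: mk2_det)
  show ?thesis
  proof (cases "e = 0")
    case True
    then have a0: "a \<noteq> 0" using det by auto
    then have "f = 1/a" using det True by (simp add: field_simps mult.commute)
    note a0 this
    then show ?thesis using True g
      by (intro exI[of _ "mat 1"] exI[of _ a] exI[of _ b]) (simp add: matrix_mul_lid matrix_mul_rid tri_def)
  next
    case False
    define d where "d = ((a+f) + csqrt ((a+f)^2 - 4)) / 2"
    have q: "d^2 - (a+f)*d + 1 = 0"
    proof -
      define r where "r = csqrt ((a+f)^2 - 4)"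
      have hs: "r * r = (a+f)*(a+f) - 4" unfolding r_def by (metis power2_csqrt power2_eq_square)
      have "d^2 - (a+f)*d + 1 = (r * r - ((a+f)*(a+f) - 4))/4"
        unfolding d_def r_def[symmetric] by (simp add: field_simps power2_eq_square)
      then show ?thesis using hs by simp
    qed
    have d0: "d \<noteq> 0" using q by auto
    have id: "1/d = a + f - d" using q d0 by (simp add: field_simps power2_eq_square)
    define P where "P = mk2 (d - f) (-1/e) e 0"
    define Q where "Q = mk2 0 (1/e) (-e) (d-f)"
    have PQ: "P ** Q = mat 1" "Q ** P = mat 1" using False
      by (simp_all add: P_def Q_def mk2_mult mk2_one mk2_eq field_simps)
    define T where "T = Q ** g ** P"
    have T: "T = tri d (T$1$2)"
    proof -
      have k: "e * (a*f - b*e + d*d - a*d - d*f) = 0" using q det by (simp add: power2_eq_square algebra_simps)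
      show ?thesis
        unfolding tri_def T_def P_def Q_def g id using False q k
        by (simp add: mk2_mult mk2_eq field_simps)
    qed
    have "P ** T ** Q = (P ** Q) ** g ** (P ** Q)" by (simp add: T_def matrix_mul_assoc)
    then have "g = P ** tri d (T$1$2) ** Q" using PQ T by (simp add: matrix_mul_lid matrix_mul_rid)
    then show ?thesis using PQ d0 by blast
  qed
qed

lemma nth_root_ex: "(d::complex) \<noteq> 0 \<Longrightarrow> n > 0 \<Longrightarrow> \<exists>mu. mu ^ n = d"
  by (rule exI[of _ "exp (Ln d / of_nat n)"]) (simp add: exp_of_nat_mult[symmetric])

definition good :: "int list \<Rightarrow> complex \<Rightarrow> bool" where
  "good cs d \<longleftrightarrow> (\<exists>lam mu. lam \<noteq> 0 \<and> mu \<noteq> 0 \<and> lam powi sum_list cs * mu ^ length cs = d \<and> Sc lam mu cs \<noteq> 0)"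

lemma surj_from_good:
  assumes "\<forall>d. d \<noteq> 0 \<longrightarrow> good cs d"
  shows "word_map_surjective (build cs)"
  unfolding word_map_surjective_def
proof
  fix g assume "g \<in> SL2"
  then have "det g = 1" by (simp add: SL2_def)
  then obtain P Q d c where PQ: "P ** Q = mat 1" "Q ** P = mat 1" and d: "d \<noteq> 0" and g: "g = P ** tri d c ** Q"
    using triangularize by blast
  obtain lam mu where lm: "lam \<noteq> 0" "mu \<noteq> 0" "lam powi sum_list cs * mu ^ length cs = d" "Sc lam mu cs \<noteq> 0"
    using assms d unfolding good_def by blast
  define t where "t = c * d / (mu * Sc lam mu cs)"
  have e: "word_eval (tri lam 0) (tri mu t) (build cs) = tri d c"
    using lm d by (simp add: eval_build tri_eq t_def)
  have "word_eval (P ** tri lam 0 ** Q) (P ** tri mu t ** Q) (build cs) = g"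
    using word_eval_conj[OF PQ tri_det tri_det, of lam mu] lm e g by simp
  moreover have "P ** tri lam 0 ** Q \<in> SL2" "P ** tri mu t ** Q \<in> SL2"
    using det_conj[OF PQ(1) tri_det] lm by (auto simp: SL2_def)
  ultimately show "\<exists>A\<in>SL2. \<exists>B\<in>SL2. word_eval A B (build cs) = g" by blast
qed

lemma Sc_one: "Sc 1 mu cs = (\<Sum>f<length cs. (mu^2)^f)"
  by (simp add: Sc_def power_mult)

lemma good_easy:
  assumes "length cs > 0" "d \<noteq> 0" "d \<noteq> -1 \<or> odd (length cs)"
  shows "good cs d"
proof -
  let ?N = "length cs"
  have goodI: "good cs d" if "mu \<noteq> 0" "mu ^ ?N = d" "(\<Sum>f<?N. (mu^2)^f) \<noteq> 0" for mu
    unfolding good_def using that by (intro exI[of _ 1] exI[of _ mu]) (simp add: Sc_one)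
  show ?thesis
  proof (cases "d = 1")
    case True then show ?thesis using assms(1) by (intro goodI[of 1]) auto
  next
    case d1: False
    show ?thesis
    proof (cases "d = -1")
      case True
      then have "odd ?N" using assms by auto
      then show ?thesis using True assms(1) by (intro goodI[of "-1"]) auto
    next
      case False
      obtain mu where mu: "mu ^ ?N = d" using nth_root_ex assms by blast
      have mu0: "mu \<noteq> 0" using mu assms by auto
      have "mu^2 \<noteq> 1"
      proof
        assume "mu^2 = 1"
        then have "mu = 1 \<or> mu = -1" by (metis power2_eq_1_iff)
        then show False using mu d1 False by (cases "even ?N") auto
      qed
      moreover have "(mu^2)^?N \<noteq> 1"
      proof
        assume "(mu^2)^?N = 1"
        then have "d^2 = 1" using mu by (metis power_mult power_mult_distrib mult.commute power_even_eq)
        then show False using d1 False by (metis power2_eq_1_iff)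
      qed
      ultimately show ?thesis using mu mu0 by (intro goodI[of mu]) (auto simp: sum_gp_strict)
    qed
  qed
qed



lemma stage3:
  fixes cs :: "int list"
  assumes len: "length cs = 2*M" and M: "M > 0"
    and h: "\<forall>f<M. int (length cs) * sum_list (take (Suc (f+M)) cs) - sum_list cs * int (f+M)
                 = int (length cs) * sum_list (take (Suc f) cs) - sum_list cs * int f"
  shows "cs = take M cs @ take M cs"
proof -
  define P where "P j = sum_list (take j cs)" for j
  have a: "2 * (P (j+M) - P j) = sum_list cs" if jj: "1 \<le> j" "j \<le> M" for j
  proof -
    obtain f where f: "j = Suc f" "f < M" using jj by (cases j) (auto simp: Suc_le_eq)
    have "int (2*M) * P (Suc (f+M)) - sum_list cs * int (f+M) = int (2*M) * P (Suc f) - sum_list cs * int f"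
      using h[rule_format, of f] f(2) len unfolding f(1) P_def by simp
    then have "int M * (2 * (P (Suc (f+M)) - P (Suc f))) = int M * sum_list cs"
      by (simp add: algebra_simps)
    then show ?thesis using M f by simp
  qed
  have PN: "P (2*M) = sum_list cs" using len by (simp add: P_def)
  have a0: "2 * (P (j+M) - P j) = sum_list cs" if "j \<le> M" for j
  proof (cases "j = 0")
    case True
    have "2 * (P (M+M) - P M) = sum_list cs" using a[of M] M by simp
    moreover have "P (M+M) = sum_list cs" by (metis PN mult_2)
    moreover have "P 0 = 0" by (simp add: P_def)
    ultimately show ?thesis using True by simp
  next
    case False then show ?thesis using a that by simp
  qed
  have nth: "cs ! j = P (Suc j) - P j" if "j < length cs" for j
    using that by (simp add: P_def take_Suc_conv_app_nth)
  have per: "cs ! (M + j) = cs ! j" if "j < M" for j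
  proof -
    have "M + j < length cs" using that len by simp
    then have "cs ! (M + j) = P (Suc j + M) - P (j + M)" using nth[of "M+j"] by (simp add: ac_simps)
    then have "2 * cs ! (M + j) = 2 * (P (Suc j + M) - P (j + M))" by simp
    also have "\<dots> = 2 * (P (Suc j + M) - P (Suc j)) - 2 * (P (j+M) - P j) + 2 * (P (Suc j) - P j)" by simp
    also have "\<dots> = 2 * (P (Suc j) - P j)" using a0[of "Suc j"] a0[of j] that by simp
    also have "\<dots> = 2 * cs ! j" using nth[of j] that len by simp
    finally show ?thesis by simp
  qed
  have "drop M cs = take M cs"
    by (rule nth_equalityI) (use len per in auto)
  then show ?thesis by (metis append_take_drop_id)
qed

definition hfun :: "int list \<Rightarrow> nat \<Rightarrow> int" where
  "hfun cs f = int (length cs) * sum_list (take (Suc f) cs) - sum_list cs * int f"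

lemma poly_zero_coeffs:
  fixes F :: "complex \<Rightarrow> complex" and e :: "nat \<Rightarrow> int" and c :: "nat \<Rightarrow> complex"
  assumes "\<forall>x. x \<noteq> 0 \<longrightarrow> (\<Sum>f<N. c f * x powi e f) = 0" and f0N: "f0 < N"
  shows "(\<Sum>f | f < N \<and> e f = e f0. c f) = 0"
proof -
  define K where "K = (\<Sum>f<N. \<bar>e f\<bar>)"
  have eK: "\<bar>e f\<bar> \<le> K" if "f < N" for f
    unfolding K_def using that by (intro member_le_sum) auto
  define p where "p = (\<Sum>f<N. monom (c f) (nat (K + e f)))"
  have "poly p x = 0" if x: "x \<noteq> 0" for x
  proof -
    have "poly p x = (\<Sum>f<N. c f * x ^ nat (K + e f))" by (simp add: p_def poly_sum poly_monom)
    also have "\<dots> = (\<Sum>f<N. x powi K * (c f * x powi e f))"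
    proof (rule sum.cong[OF refl])
      fix f assume "f \<in> {..<N}"
      then have "K + e f \<ge> 0" using eK[of f] by auto
      then have "x ^ nat (K + e f) = x powi (K + e f)" by (simp add: power_int_def)
      then show "c f * x ^ nat (K + e f) = x powi K * (c f * x powi e f)" using x by (simp add: power_int_add)
    qed
    also have "\<dots> = x powi K * (\<Sum>f<N. c f * x powi e f)" by (simp add: sum_distrib_left)
    also have "\<dots> = 0" using assms x by simp
    finally show ?thesis .
  qed
  then have sub: "UNIV - {0} \<subseteq> {x. poly p x = 0}" by auto
  have "infinite (UNIV - {0::complex})" by (simp add: infinite_UNIV_char_0)
  then have "infinite {x. poly p x = 0}" using sub finite_subset by blast
  then have p0: "p = 0" using poly_roots_finite by blast
  have "coeff p (nat (K + e f0)) = (\<Sum>f<N. if nat (K + e f) = nat (K + e f0) then c f else 0)"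
    by (simp add: p_def coeff_sum coeff_monom)
  also have "\<dots> = (\<Sum>f<N. if e f = e f0 then c f else 0)"
  proof (rule sum.cong[OF refl])
    fix f assume "f \<in> {..<N}"
    then have "K + e f \<ge> 0" using eK[of f] by auto
    moreover have "K + e f0 \<ge> 0" using eK[of f0] f0N by auto
    ultimately show "(if nat (K + e f) = nat (K + e f0) then c f else 0) = (if e f = e f0 then c f else 0)"
      by auto
  qed
  also have "\<dots> = (\<Sum>f | f < N \<and> e f = e f0. c f)"
    by (simp add: sum.If_cases Int_def conj_commute)
  finally show ?thesis using p0 by simp
qed

lemma stage1:
  fixes cs :: "int list" and z :: complex
  assumes bad: "\<forall>lam mu. lam \<noteq> 0 \<longrightarrow> mu \<noteq> 0 \<longrightarrow> lam powi sum_list cs * mu ^ length cs = -1 \<longrightarrow> Sc lam mu cs = 0"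
    and z: "z ^ length cs = -1" and f0: "f0 < length cs"
  shows "(\<Sum>f | f < length cs \<and> hfun cs f = hfun cs f0. (z^2)^f) = 0"
proof -
  let ?N = "length cs" and ?a = "sum_list cs"
  have z0: "z \<noteq> 0" using z f0 by (cases ?N) auto
  have "\<forall>x. x \<noteq> 0 \<longrightarrow> (\<Sum>f<?N. (z^2)^f * x powi (2 * hfun cs f)) = 0"
  proof (intro allI impI)
    fix x :: complex assume x: "x \<noteq> 0"
    define lam where "lam = x ^ ?N"
    define mu where "mu = z * x powi (- ?a)"
    have l0: "lam \<noteq> 0" "mu \<noteq> 0" using x z0 by (auto simp: lam_def mu_def)
    have "lam powi ?a * mu ^ ?N = z ^ ?N * (x powi (int ?N * ?a) * x powi (- ?a * int ?N))"
      unfolding lam_def mu_def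
      by (simp only: power_int_power power_mult_distrib power_int_power' mult_ac)
    also have "\<dots> = z ^ ?N * x powi (int ?N * ?a + (- ?a * int ?N))" by (simp only: power_int_add[OF disjI1[OF x]])
    also have "\<dots> = -1" using z by simp
    finally have "Sc lam mu cs = 0" using bad l0 by blast
    moreover have "Sc lam mu cs = (\<Sum>f<?N. (z^2)^f * x powi (2 * hfun cs f))"
      unfolding Sc_def
    proof (rule sum.cong[OF refl])
      fix f assume "f \<in> {..<?N}"
      have A: "(lam powi sum_list (take (Suc f) cs))\<^sup>2 = x powi (int ?N * sum_list (take (Suc f) cs) * int 2)"
        unfolding lam_def by (simp only: power_int_power power_int_power')
      have B: "mu ^ (2 * f) = (z^2)^f * x powi (- ?a * int (2*f))"
        unfolding mu_def by (simp only: power_mult_distrib power_mult power_int_power' of_nat_mult mult.assoc)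
      have E: "int ?N * sum_list (take (Suc f) cs) * int 2 + (- ?a * int (2*f)) = 2 * hfun cs f"
        unfolding hfun_def by (simp add: algebra_simps)
      have "(lam powi sum_list (take (Suc f) cs))\<^sup>2 * mu ^ (2 * f) = (z^2)^f * (x powi (int ?N * sum_list (take (Suc f) cs) * int 2) * x powi (- ?a * int (2*f)))"
        unfolding A B by (simp only: mult_ac)
      also have "\<dots> = (z^2)^f * x powi (2 * hfun cs f)"
        by (simp only: power_int_add[OF disjI1[OF x], symmetric] E)
      finally show "(lam powi sum_list (take (Suc f) cs))\<^sup>2 * mu ^ (2 * f) = (z^2)^f * x powi (2 * hfun cs f)" .
    qed
    ultimately show "(\<Sum>f<?N. (z^2)^f * x powi (2 * hfun cs f)) = 0" by simp
  qed
  from poly_zero_coeffs[OF this f0] show ?thesis by simp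
qed

lemma stage2:
  fixes cs :: "int list"
  assumes bad: "\<forall>lam mu. lam \<noteq> 0 \<longrightarrow> mu \<noteq> 0 \<longrightarrow> lam powi sum_list cs * mu ^ length cs = -1 \<longrightarrow> Sc lam mu cs = 0"
    and len: "length cs = 2*M" and M: "M > 0" and f0: "f0 < M"
  shows "hfun cs (f0 + M) = hfun cs f0"
proof (rule ccontr)
  assume ne: "hfun cs (f0 + M) \<noteq> hfun cs f0"
  define S where "S = {f. f < length cs \<and> hfun cs f = hfun cs f0}"
  have finS: "finite S" unfolding S_def by auto
  have f0S: "f0 \<in> S" using f0 len by (simp add: S_def)
  have nS: "f0 + M \<notin> S" using ne by (simp add: S_def)
  have Slt: "f < 2*M" if "f \<in> S" for f using that len by (simp add: S_def)
  define c where "c f = (if f < M then 1 else -1 :: complex)" for f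
  define R where "R = (\<Sum>f\<in>S. monom (c f) (f mod M))"
  have root: "poly R w = 0" if w: "w ^ M = -1" for w
  proof -
    define z where "z = csqrt w"
    have z2: "z^2 = w" by (simp add: z_def)
    have zN: "z ^ length cs = -1" using len w z2 by (simp add: power_mult)
    have s0: "(\<Sum>f\<in>S. w^f) = 0" using stage1[OF bad zN, of f0] f0 len z2 by (simp add: S_def)
    have "poly R w = (\<Sum>f\<in>S. c f * w ^ (f mod M))" by (simp add: R_def poly_sum poly_monom)
    also have "\<dots> = (\<Sum>f\<in>S. w^f)"
    proof (rule sum.cong[OF refl])
      fix f assume "f \<in> S"
      then have f2: "f < 2*M" by (rule Slt)
      show "c f * w ^ (f mod M) = w ^ f"
      proof (cases "f < M")
        case True then show ?thesis by (simp add: c_def)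
      next
        case False
        then have fm: "f mod M = f - M" using f2 by (simp add: le_mod_geq)
        have "w ^ f = w ^ M * w ^ (f - M)" using False by (simp add: power_add[symmetric])
        then show ?thesis using False fm w by (simp add: c_def)
      qed
    qed
    finally show ?thesis using s0 by simp
  qed
  have degR: "degree R < M"
    unfolding R_def using M by (intro degree_sum_less) (auto intro: le_less_trans[OF degree_monom_le])
  have R0: "R = 0"
  proof (rule ccontr)
    assume "R \<noteq> 0"
    then have "card {x. poly R x = 0} \<le> degree R" "finite {x. poly R x = 0}"
      using card_poly_roots_bound poly_roots_finite by auto
    moreover have "{w::complex. w ^ M = -1} \<subseteq> {x. poly R x = 0}" using root by auto
    ultimately have "card {w::complex. w ^ M = -1} \<le> degree R" by (meson card_mono le_trans)
    then show False using card_nth_roots[of "-1" M] M degR by simp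
  qed
  have "coeff R f0 = (\<Sum>f\<in>S. if f mod M = f0 then c f else 0)"
    by (simp add: R_def coeff_sum coeff_monom eq_commute)
  also have "\<dots> = (\<Sum>f\<in>S. if f = f0 then c f else 0)"
  proof (rule sum.cong[OF refl])
    fix f assume fS: "f \<in> S"
    have "f mod M = f0 \<longleftrightarrow> f = f0"
    proof
      assume h: "f mod M = f0"
      show "f = f0"
      proof (cases "f < M")
        case True then show ?thesis using h by simp
      next
        case False
        then have "f mod M = f - M" using Slt[OF fS] by (simp add: le_mod_geq)
        then have "f = f0 + M" using h False by simp
        then show ?thesis using fS nS by simp
      qed
    qed (use f0 in simp)
    then show "(if f mod M = f0 then c f else 0) = (if f = f0 then c f else 0)" by simp
  qed
  also have "\<dots> = 1" using finS f0S f0 by (simp add: c_def)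
  finally show False using R0 by simp
qed



definition ycount :: "letter \<Rightarrow> int" where
  "ycount l = (if fst l = GY then (if snd l then -1 else 1) else 0)"

lemma ycount_inv: "ycount (inv_letter l) = - ycount l"
  by (simp add: ycount_def inv_letter_def)

lemma ys_freduce: "sum_list (map ycount (freduce w)) = sum_list (map ycount w)"
proof (induction w)
  case Nil then show ?case by simp
next
  case (Cons l w)
  show ?case
  proof (cases "freduce w")
    case Nil then show ?thesis using Cons by simp
  next
    case (Cons m r)
    show ?thesis
    proof (cases "m = inv_letter l")
      case True
      then have "sum_list (map ycount (freduce (l # w))) = sum_list (map ycount r)" using Cons by simp
      also have "\<dots> = ycount l + sum_list (map ycount (m # r))" using True by (simp add: ycount_inv)
      finally show ?thesis using Cons \<open>freduce w = m # r\<close> Cons.IH by simp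
    next
      case False then show ?thesis using Cons.IH \<open>freduce w = m # r\<close> by simp
    qed
  qed
qed

lemma ys_build: "sum_list (map ycount (build cs)) = int (length cs)"
  by (induction cs) (simp_all add: gen_pow_def ycount_def sum_list_replicate)

lemma build_concat: "build (concat xss) = concat (map build xss)"
  by (induction xss) simp_all

lemma build_rep0: "build (replicate m 0) = replicate m (GY, False)"
  by (induction m) (simp_all add: gen_pow_def)

lemma word_w_build:
  assumes "\<forall>i<k. b i > 0"
  shows "word_w a b k = build (concat (map (\<lambda>i. a i # replicate (nat (b i) - 1) 0) [0..<k]))"
proof -
  have "build (concat (map (\<lambda>i. a i # replicate (nat (b i) - 1) 0) [0..<k]))
      = concat (map (\<lambda>i. build (a i # replicate (nat (b i) - 1) 0)) [0..<k])"
    by (simp add: build_concat comp_def)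
  also have "\<dots> = concat (map (\<lambda>i. gen_pow GX (a i) @ gen_pow GY (b i)) [0..<k])"
  proof (rule arg_cong[where f=concat], rule map_cong[OF refl])
    fix i assume "i \<in> set [0..<k]"
    then have "b i > 0" using assms by simp
    then have "gen_pow GY (b i) = (GY, False) # replicate (nat (b i) - 1) (GY, False)"
    proof -
      obtain n where n: "nat (b i) = Suc n" using \<open>b i > 0\<close> by (metis gr0_implies_Suc zero_less_nat_eq)
      show ?thesis using \<open>b i > 0\<close> n by (simp add: gen_pow_def)
    qed
    then show "build (a i # replicate (nat (b i) - 1) 0) = gen_pow GX (a i) @ gen_pow GY (b i)"
      by (simp add: build_rep0)
  qed
  finally show ?thesis by (simp add: word_w_def)
qed

theorem corollary1p4:
  fixes a b :: "nat \<Rightarrow> int" and k :: nat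
  assumes "k \<ge> 1"
    and "\<forall>i<k. a i \<noteq> 0"
    and "\<forall>i<k. b i \<noteq> 0"
    and "\<forall>i<k. b i > 0"
  shows "word_map_surjective (word_w a b k)
         \<or> (\<exists>v. \<not> free_eq v [] \<and> free_eq (word_w a b k) (v @ v))"
proof -
  define cs where "cs = concat (map (\<lambda>i. a i # replicate (nat (b i) - 1) 0) [0..<k])"
  have w: "word_w a b k = build cs" unfolding cs_def using assms(4) by (rule word_w_build)
  have "[0..<k] = 0 # [1..<k]" using assms(1) by (simp add: upt_conv_Cons)
  then have lpos: "length cs > 0" unfolding cs_def by simp
  show ?thesis
  proof (cases "\<forall>d. d \<noteq> 0 \<longrightarrow> good cs d")
    case True
    then show ?thesis using surj_from_good w by simp
  next
    case False
    then obtain d where d: "d \<noteq> 0" "\<not> good cs d" by blast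
    then have dm: "d = -1" and ev: "even (length cs)" using good_easy[OF lpos d(1)] by blast+
    then obtain M where len: "length cs = 2*M" by (metis evenE)
    have M: "M > 0" using len lpos by simp
    have bad: "\<forall>lam mu. lam \<noteq> 0 \<longrightarrow> mu \<noteq> 0 \<longrightarrow> lam powi sum_list cs * mu ^ length cs = -1 \<longrightarrow> Sc lam mu cs = 0"
      using d dm unfolding good_def by blast
    have "\<forall>f<M. hfun cs (f + M) = hfun cs f" using stage2[OF bad len M] by blast
    then have sq: "cs = take M cs @ take M cs" using stage3[OF len M] by (simp add: hfun_def)
    define v where "v = build (take M cs)"
    have "word_w a b k = v @ v" unfolding w v_def by (subst sq) simp
    moreover have "\<not> free_eq v []"
    proof
      assume "free_eq v []"
      then have "freduce v = []" by (simp add: free_eq_def)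
      then have "sum_list (map ycount v) = 0" using ys_freduce[of v] by simp
      moreover have "sum_list (map ycount v) = int M" unfolding v_def ys_build using len by simp
      ultimately show False using M by simp
    qed
    ultimately show ?thesis by (auto simp: free_eq_def)
  qed
qed

end
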